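(* Let $d\ge1$, let $Z$ be a simple $d$-cycle, and let $D\subseteq\mathrm{Supp}(Z)$. Then the graph obtained from $G_d(Z)$ by deleting the vertices corresponding to $D$ has at most $1+\tilde\beta_{d-1}(K(D))$ connected components, where $\tilde\beta_{d-1}(K(D))=\dim\tilde H_{d-1}(K(D))$.
   Context: Fix a field $\mathbb F$. A $d$-simplex is a $(d+1)$-element subset of $[n]$ oriented by increasing order $s_1<\dots<s_{d+1}$; the empty set is the $(-1)$-simplex. A $d$-chain is a formal $\mathbb F$-combination of $d$-simplices with support the set of simplices with nonzero coefficient; $\partial\sigma=\sum_i(-1)^{i-1}(\sigma\setminus\{s_i\})$, extended linearly (reduced convention). A $d$-cycle is a chain with $\partial Z=0$; it is simple if $Z\ne0$ and every $d$-cycle supported in $\mathrm{Supp}(Z)$ is a scalar multiple of $Z$. For a set $S$ of simplices, $K(S)$ is the complex of all subsets of members of $S$; $\tilde H_{d-1}(K)$ is the space of $(d-1)$-cycles supported on $K$ modulo $\{\partial B: B$ a $d$-chain supported on $K\}$. The facet graph $G_d(Z)$ has vertex set $\mathrm{Supp}(Z)$, two $d$-simplices adjacent iff they share a $(d-1)$-face. *)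

theory Defs
  imports Complex_Main "HOL-Library.Function_Algebras"
begin

definition simplex :: "nat \<Rightarrow> nat \<Rightarrow> nat set \<Rightarrow> bool" where
  "simplex n d \<sigma> \<longleftrightarrow> \<sigma> \<subseteq> {1..n} \<and> card \<sigma> = d + 1"

definition supp :: "(nat set \<Rightarrow> 'a::zero) \<Rightarrow> nat set set" where
  "supp c = {\<sigma>. c \<sigma> \<noteq> 0}"

definition is_chain :: "nat \<Rightarrow> nat \<Rightarrow> (nat set \<Rightarrow> 'a::zero) \<Rightarrow> bool" where
  "is_chain n d c \<longleftrightarrow> supp c \<subseteq> {\<sigma>. simplex n d \<sigma>}"

text \<open>Boundary (reduced convention): the coefficient of tau in the boundary of c
is the sum over v not in tau of (-1)^(i-1) c(tau + v), where i is the position of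
v in the increasingly ordered simplex tau + v, i.e. i - 1 = #{x in tau. x < v}.\<close>
definition bd :: "nat \<Rightarrow> (nat set \<Rightarrow> 'a::comm_ring_1) \<Rightarrow> nat set \<Rightarrow> 'a" where
  "bd n c \<tau> = (\<Sum>v \<in> {1..n} - \<tau>. (-1) ^ card {x \<in> \<tau>. x < v} * c (insert v \<tau>))"

definition is_cycle :: "nat \<Rightarrow> nat \<Rightarrow> (nat set \<Rightarrow> 'a::comm_ring_1) \<Rightarrow> bool" where
  "is_cycle n d Z \<longleftrightarrow> is_chain n d Z \<and> bd n Z = (\<lambda>_. 0)"

definition simple_cycle :: "nat \<Rightarrow> nat \<Rightarrow> (nat set \<Rightarrow> 'a::field) \<Rightarrow> bool" where
  "simple_cycle n d Z \<longleftrightarrow> is_cycle n d Z \<and> Z \<noteq> (\<lambda>_. 0) \<and>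
     (\<forall>Y. is_cycle n d Y \<and> supp Y \<subseteq> supp Z \<longrightarrow> (\<exists>a. Y = (\<lambda>\<sigma>. a * Z \<sigma>)))"

definition cplx :: "nat set set \<Rightarrow> nat set set" where
  "cplx S = {\<tau>. \<exists>\<sigma>\<in>S. \<tau> \<subseteq> \<sigma>}"

definition cycles_on :: "nat \<Rightarrow> nat \<Rightarrow> nat set set \<Rightarrow> (nat set \<Rightarrow> 'a::field) set" where
  "cycles_on n k K = {c. is_cycle n k c \<and> supp c \<subseteq> K}"

definition boundaries_on :: "nat \<Rightarrow> nat \<Rightarrow> nat set set \<Rightarrow> (nat set \<Rightarrow> 'a::field) set" where
  "boundaries_on n k K = {bd n B | B. is_chain n (k + 1) B \<and> supp B \<subseteq> K}"

definition cscale :: "'a::field \<Rightarrow> (nat set \<Rightarrow> 'a) \<Rightarrow> nat set \<Rightarrow> 'a" where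
  "cscale a c = (\<lambda>\<sigma>. a * c \<sigma>)"

lemma vector_space_cscale: "vector_space (cscale :: 'a::field \<Rightarrow> _)"
  by unfold_locales (auto simp: cscale_def algebra_simps)

text \<open>Reduced Betti number: dim of (k-cycles on K) / (boundaries of (k+1)-chains on K),
computed as dim Z_k - dim B_k (both finite-dimensional, B_k a subspace of Z_k).\<close>
definition betti :: "'a::field itself \<Rightarrow> nat \<Rightarrow> nat \<Rightarrow> nat set set \<Rightarrow> nat" where
  "betti _ n k K = vector_space.dim (cscale :: 'a \<Rightarrow> _) (cycles_on n k K :: (nat set \<Rightarrow> 'a) set)
                 - vector_space.dim (cscale :: 'a \<Rightarrow> _) (boundaries_on n k K :: (nat set \<Rightarrow> 'a) set)"

definition facet_adj :: "nat \<Rightarrow> nat set \<Rightarrow> nat set \<Rightarrow> bool" where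
  "facet_adj d \<sigma> \<tau> \<longleftrightarrow> \<sigma> \<noteq> \<tau> \<and> card (\<sigma> \<inter> \<tau>) = d"

definition num_components :: "nat \<Rightarrow> nat set set \<Rightarrow> nat" where
  "num_components d V = card (V // (rtrancl {(\<sigma>, \<tau>). \<sigma> \<in> V \<and> \<tau> \<in> V \<and> facet_adj d \<sigma> \<tau>}))"

end

theory Submission
  imports Defs
begin

lemma sum_apply_fun: "(sum f A) x = (\<Sum>a\<in>A. f a x)"
  by (induct A rule: infinite_finite_induct) auto

lemma card_less_insert:
  assumes "w \<notin> \<rho>"
  shows "card {x \<in> insert w \<rho>. x < v} = card {x \<in> \<rho>. x < (v::nat)} + (if w < v then 1 else 0)"
proof (cases "w < v")
  case True
  have "{x \<in> insert w \<rho>. x < v} = insert w {x \<in> \<rho>. x < v}" using True by auto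
  moreover have "finite {x \<in> \<rho>. x < v}" by (rule finite_subset[of _ "{..<v}"]) auto
  ultimately show ?thesis using assms True by simp
next
  case False
  have "{x \<in> insert w \<rho>. x < v} = {x \<in> \<rho>. x < v}" using False by auto
  then show ?thesis using False by simp
qed

lemma bd_bd: "bd n (bd n (c :: nat set \<Rightarrow> 'a::comm_ring_1)) = (\<lambda>_. 0)"
proof
  fix \<rho>
  define M where "M = {1..n} - \<rho>"
  define s where "s = (\<lambda>(r::nat set) v. ((-1::'a) ^ card {x \<in> r. x < v}))"
  define f where "f = (\<lambda>(w,v). s \<rho> w * (s (insert w \<rho>) v * c (insert v (insert w \<rho>))))"
  have fin: "finite M" unfolding M_def by auto
  have "bd n (bd n c) \<rho> = (\<Sum>w\<in>M. \<Sum>v\<in>M - {w}. f (w,v))"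
    unfolding bd_def
  proof (rule sum.cong)
    show "{1..n} - \<rho> = M" by (simp add: M_def)
  next
    fix w assume "w \<in> M"
    have e: "{1..n} - insert w \<rho> = M - {w}" by (auto simp: M_def)
    show "(- 1) ^ card {x \<in> \<rho>. x < w} *
         (\<Sum>v\<in>{1..n} - insert w \<rho>. (- 1) ^ card {x \<in> insert w \<rho>. x < v} * c (insert v (insert w \<rho>))) =
         (\<Sum>v\<in>M - {w}. f (w, v))"
      unfolding e f_def s_def by (simp add: sum_distrib_left)
  qed
  also have "\<dots> = (\<Sum>p\<in>(SIGMA w:M. M - {w}). f p)"
    using fin by (subst sum.Sigma) auto
  also have "(SIGMA w:M. M - {w}) = {p\<in>M\<times>M. fst p < snd p} \<union> {p\<in>M\<times>M. snd p < fst p}"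
    by auto
  also have "(\<Sum>p\<in>\<dots>. f p) = (\<Sum>p\<in>{p\<in>M\<times>M. fst p < snd p}. f p) + (\<Sum>p\<in>{p\<in>M\<times>M. snd p < fst p}. f p)"
    using fin by (intro sum.union_disjoint) auto
  also have "(\<Sum>p\<in>{p\<in>M\<times>M. snd p < fst p}. f p) = (\<Sum>p\<in>{p\<in>M\<times>M. fst p < snd p}. f (prod.swap p))"
  proof -
    have "{p\<in>M\<times>M. snd p < fst p} = prod.swap ` {p\<in>M\<times>M. fst p < snd p}" by force
    then show ?thesis by (simp add: sum.reindex)
  qed
  also have "\<dots> = (\<Sum>p\<in>{p\<in>M\<times>M. fst p < snd p}. - f p)"
  proof (rule sum.cong[OF refl])
    fix p assume p: "p \<in> {p\<in>M\<times>M. fst p < snd p}"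
    obtain w v where pv: "p = (w,v)" by force
    have w: "w \<notin> \<rho>" "v \<notin> \<rho>" "w < v" using p pv M_def by auto
    have e: "insert w (insert v \<rho>) = insert v (insert w \<rho>)" by auto
    have c1: "s (insert v \<rho>) w = s \<rho> w" unfolding s_def
      using card_less_insert[OF w(2), of w] w by simp
    have c2: "s (insert w \<rho>) v = - s \<rho> v" unfolding s_def
      using card_less_insert[OF w(1), of v] w by simp
    have "f (prod.swap p) = s \<rho> v * (s (insert v \<rho>) w * c (insert w (insert v \<rho>)))"
      by (simp add: pv f_def)
    moreover have "f p = s \<rho> w * (s (insert w \<rho>) v * c (insert v (insert w \<rho>)))"
      by (simp add: pv f_def)
    ultimately show "f (prod.swap p) = - f p"
      by (simp add: c1 c2 e)
  qed
  finally show "bd n (bd n c) \<rho> = 0" by (simp add: sum_negf)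
qed

lemma bd_sum: "bd n (\<lambda>\<sigma>. \<Sum>i\<in>I. f i \<sigma>) \<tau> = (\<Sum>i\<in>I. bd n (f i) \<tau>)"
  unfolding bd_def by (simp add: sum_distrib_left sum.swap[of _ I] mult.left_commute)

lemma bd_mult: "bd n (\<lambda>\<sigma>. a * f \<sigma>) \<tau> = a * bd n f \<tau>"
  unfolding bd_def by (simp add: sum_distrib_left mult.left_commute)

lemma bd_diff: "bd n (\<lambda>\<sigma>. f \<sigma> - g \<sigma>) \<tau> = bd n f \<tau> - bd n g \<tau>"
  unfolding bd_def by (simp add: sum_subtractf right_diff_distrib)

lemma bd_add: "bd n (\<lambda>\<sigma>. f \<sigma> + g \<sigma>) \<tau> = bd n f \<tau> + bd n g \<tau>"
  unfolding bd_def by (simp add: sum.distrib distrib_left)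


definition restr :: "nat set set \<Rightarrow> (nat set \<Rightarrow> 'a::zero) \<Rightarrow> nat set \<Rightarrow> 'a" where
  "restr C Z = (\<lambda>\<sigma>. if \<sigma> \<in> C then Z \<sigma> else 0)"

lemma quot_facts:
  assumes "E \<subseteq> V \<times> V" "C \<in> V // E\<^sup>*"
  shows "C \<subseteq> V" "C \<noteq> {}" "\<And>\<sigma> \<sigma>'. \<sigma> \<in> C \<Longrightarrow> (\<sigma>, \<sigma>') \<in> E \<Longrightarrow> \<sigma>' \<in> C"
proof -
  obtain x where x: "x \<in> V" "C = E\<^sup>* `` {x}" using assms(2) by (auto elim!: quotientE)
  have "\<And>y. (x, y) \<in> E\<^sup>* \<Longrightarrow> y \<in> V"
  proof -
    fix y assume "(x, y) \<in> E\<^sup>*"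
    then show "y \<in> V" by (induct rule: rtrancl_induct) (use x assms(1) in auto)
  qed
  then show "C \<subseteq> V" using x by auto
  show "C \<noteq> {}" using x by auto
  fix \<sigma> \<sigma>' assume "\<sigma> \<in> C" "(\<sigma>, \<sigma>') \<in> E"
  then show "\<sigma>' \<in> C" using x by (auto intro: rtrancl_into_rtrancl)
qed

lemma quot_disj:
  assumes "sym E" "C \<in> V // E\<^sup>*" "C' \<in> V // E\<^sup>*" "\<sigma> \<in> C" "\<sigma> \<in> C'"
  shows "C = C'"
proof -
  obtain x where x: "C = E\<^sup>* `` {x}" using assms(2) by (auto elim!: quotientE)
  obtain y where y: "C' = E\<^sup>* `` {y}" using assms(3) by (auto elim!: quotientE)
  have s: "sym (E\<^sup>*)" using assms(1) by (rule sym_rtrancl)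
  have a: "(x, \<sigma>) \<in> E\<^sup>*" "(y, \<sigma>) \<in> E\<^sup>*" using assms(4,5) x y by auto
  have b: "(\<sigma>, y) \<in> E\<^sup>*" "(\<sigma>, x) \<in> E\<^sup>*" using a s by (auto dest: symD)
  have xy: "(x, y) \<in> E\<^sup>*" "(y, x) \<in> E\<^sup>*"
    using rtrancl_trans[OF a(1) b(1)] rtrancl_trans[OF a(2) b(2)] by auto
  show ?thesis unfolding x y
  proof (intro equalityI subsetI)
    fix z assume "z \<in> E\<^sup>* `` {x}"
    then show "z \<in> E\<^sup>* `` {y}" using rtrancl_trans[OF xy(2)] by auto
  next
    fix z assume "z \<in> E\<^sup>* `` {y}"
    then show "z \<in> E\<^sup>* `` {x}" using rtrancl_trans[OF xy(1)] by auto
  qed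
qed

lemma neg1_pow_mult_eq0[simp]: "((-1::'a::comm_ring_1)^k * x = 0) = (x = 0)"
  by (cases "even k") simp_all

lemma sum_nonzeroE:
  assumes "sum f A \<noteq> (0::'a::comm_monoid_add)"
  obtains x where "x \<in> A" "f x \<noteq> 0"
  using assms sum.neutral by metis

lemma bd_chain:
  assumes "is_chain n d c" "d \<ge> 1"
  shows "is_chain n (d - 1) (bd n (c :: nat set \<Rightarrow> 'a::comm_ring_1))"
  unfolding is_chain_def supp_def
proof clarify
  fix \<tau> assume "bd n c \<tau> \<noteq> 0"
  then obtain v where v: "v \<in> {1..n} - \<tau>" "c (insert v \<tau>) \<noteq> 0"
    unfolding bd_def by (auto elim!: sum_nonzeroE)
  then have s: "simplex n d (insert v \<tau>)" using assms(1) by (auto simp: is_chain_def supp_def)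
  then have "finite (insert v \<tau>)" using assms(2) unfolding simplex_def using finite_subset[of _ "{1..n}"] by auto
  then show "simplex n (d - 1) \<tau>" using s v assms(2) by (auto simp: simplex_def)
qed

lemma restr_chain: "is_chain n d Z \<Longrightarrow> is_chain n d (restr C Z)"
  by (auto simp: is_chain_def supp_def restr_def)

lemma bd_supp_cplx:
  assumes cyc: "is_cycle n d Z" and d: "d \<ge> 1"
    and C: "C \<in> (supp Z - D) // {(\<sigma>, \<tau>). \<sigma> \<in> supp Z - D \<and> \<tau> \<in> supp Z - D \<and> facet_adj d \<sigma> \<tau>}\<^sup>*"
  shows "supp (bd n (restr C (Z :: nat set \<Rightarrow> 'a::comm_ring_1))) \<subseteq> cplx D"
proof
  let ?V = "supp Z - D"
  let ?E = "{(\<sigma>, \<tau>). \<sigma> \<in> supp Z - D \<and> \<tau> \<in> supp Z - D \<and> facet_adj d \<sigma> \<tau>}"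
  fix \<tau> assume "\<tau> \<in> supp (bd n (restr C Z))"
  then have nz: "bd n (restr C Z) \<tau> \<noteq> 0" by (simp add: supp_def)
  have "bd n (\<lambda>\<sigma>. Z \<sigma> - restr C Z \<sigma>) \<tau> = bd n Z \<tau> - bd n (restr C Z) \<tau>" by (rule bd_diff)
  also have "bd n Z \<tau> = 0" using cyc by (simp add: is_cycle_def)
  finally have "bd n (\<lambda>\<sigma>. Z \<sigma> - restr C Z \<sigma>) \<tau> \<noteq> 0" using nz by simp
  then obtain v where v: "v \<in> {1..n} - \<tau>" "Z (insert v \<tau>) - restr C Z (insert v \<tau>) \<noteq> 0"
    unfolding bd_def by (auto elim!: sum_nonzeroE)
  then have v2: "insert v \<tau> \<notin> C" "Z (insert v \<tau>) \<noteq> 0" by (auto simp: restr_def split: if_splits)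
  obtain u where u: "u \<in> {1..n} - \<tau>" "restr C Z (insert u \<tau>) \<noteq> 0"
    using nz unfolding bd_def by (auto elim!: sum_nonzeroE)
  then have u2: "insert u \<tau> \<in> C" "Z (insert u \<tau>) \<noteq> 0" by (auto simp: restr_def split: if_splits)
  have uv: "u \<noteq> v" using u2 v2 by auto
  have s: "simplex n d (insert u \<tau>)" using u2 cyc by (auto simp: is_cycle_def is_chain_def supp_def)
  then have fin: "finite (insert u \<tau>)" unfolding simplex_def using finite_subset[of _ "{1..n}"] by auto
  have ct: "card \<tau> = d" using s fin u by (auto simp: simplex_def)
  show "\<tau> \<in> cplx D"
  proof (rule ccontr)
    assume "\<tau> \<notin> cplx D"
    then have "insert v \<tau> \<notin> D" unfolding cplx_def by auto
    then have vV: "insert v \<tau> \<in> ?V" using v2 by (auto simp: supp_def)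
    have uV: "insert u \<tau> \<in> ?V" using quot_facts(1)[of ?E ?V C] C u2 by auto
    have "insert u \<tau> \<inter> insert v \<tau> = \<tau>" using u v uv by auto
    then have "facet_adj d (insert u \<tau>) (insert v \<tau>)" using ct u2 v2 by (auto simp: facet_adj_def)
    then have "insert v \<tau> \<in> C" using quot_facts(3)[of ?E ?V C "insert u \<tau>" "insert v \<tau>"] C u2 uV vV by auto
    then show False using v2 by simp
  qed
qed


lemma finite_simplices: "finite {\<sigma>. simplex n d \<sigma>}"
  by (rule finite_subset[of _ "Pow {1..n}"]) (auto simp: simplex_def)

lemma chain_supp_finite: "is_chain n d c \<Longrightarrow> finite (supp c)"
  unfolding is_chain_def using finite_simplices finite_subset by blast

lemma key:
  fixes Z :: "nat set \<Rightarrow> 'a::field"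
  assumes sc: "simple_cycle n d Z" and DZ: "D \<subseteq> supp Z" and d: "d \<ge> 1"
  defines "V \<equiv> supp Z - D"
  defines "E \<equiv> {(\<sigma>, \<tau>). \<sigma> \<in> V \<and> \<tau> \<in> V \<and> facet_adj d \<sigma> \<tau>}"
  assumes C0: "C0 \<in> V // E\<^sup>*" "a C0 = 0"
    and bnd: "(\<lambda>\<tau>. \<Sum>C\<in>V // E\<^sup>*. a C * bd n (restr C Z) \<tau>) \<in> boundaries_on n (d - 1) (cplx D)"
  shows "\<forall>C\<in>V // E\<^sup>*. a C = 0"
proof -
  let ?P = "V // E\<^sup>*"
  have cyc: "is_cycle n d Z" using sc by (simp add: simple_cycle_def)
  have EV: "E \<subseteq> V \<times> V" unfolding E_def by auto
  have symE: "sym E" unfolding E_def facet_adj_def by (auto intro!: symI simp: Int_commute)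
  have finV: "finite V" unfolding V_def using chain_supp_finite cyc is_cycle_def by blast
  have finP: "finite ?P"
    by (rule finite_subset[of _ "Pow V"]) (use quot_facts(1)[OF EV] finV in auto)
  obtain B where B: "is_chain n (d - 1 + 1) B" "supp B \<subseteq> cplx D"
      "bd n B = (\<lambda>\<tau>. \<Sum>C\<in>?P. a C * bd n (restr C Z) \<tau>)"
    using bnd unfolding boundaries_on_def by auto
  have Bc: "is_chain n d B" using B(1) d by simp
  have BD: "supp B \<subseteq> D"
  proof
    fix \<sigma> assume s: "\<sigma> \<in> supp B"
    then obtain \<delta> where \<delta>: "\<delta> \<in> D" "\<sigma> \<subseteq> \<delta>" using B(2) by (auto simp: cplx_def)
    have "simplex n d \<delta>" using \<delta> DZ cyc by (auto simp: is_cycle_def is_chain_def)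
    moreover have "simplex n d \<sigma>" using s Bc by (auto simp: is_chain_def)
    ultimately have "\<sigma> = \<delta>" using \<delta>(2)
      by (metis card_subset_eq simplex_def finite_subset finite_atLeastAtMost)
    then show "\<sigma> \<in> D" using \<delta> by simp
  qed
  define Y where "Y = (\<lambda>\<sigma>. (\<Sum>C\<in>?P. a C * restr C Z \<sigma>) - B \<sigma>)"
  have Ysupp: "supp Y \<subseteq> supp Z"
  proof
    fix \<sigma> assume "\<sigma> \<in> supp Y"
    show "\<sigma> \<in> supp Z"
    proof (rule ccontr)
      assume "\<sigma> \<notin> supp Z"
      then have "Z \<sigma> = 0" "B \<sigma> = 0" using BD DZ by (auto simp: supp_def)
      then have z: "Z \<sigma> = 0" "B \<sigma> = 0" by auto
      have "restr C Z \<sigma> = 0" for C unfolding restr_def using z(1) by simp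
      then have "(\<Sum>C\<in>?P. a C * restr C Z \<sigma>) = 0" by simp
      then have "Y \<sigma> = 0" using \<open>B \<sigma> = 0\<close> by (simp add: Y_def)
      then show False using \<open>\<sigma> \<in> supp Y\<close> by (simp add: supp_def)
    qed
  qed
  have Ychain: "is_chain n d Y" using Ysupp cyc by (auto simp: is_cycle_def is_chain_def)
  have "bd n Y \<tau> = 0" for \<tau>
  proof -
    have "bd n Y \<tau> = bd n (\<lambda>\<sigma>. \<Sum>C\<in>?P. a C * restr C Z \<sigma>) \<tau> - bd n B \<tau>"
      unfolding Y_def by (rule bd_diff)
    also have "bd n (\<lambda>\<sigma>. \<Sum>C\<in>?P. a C * restr C Z \<sigma>) \<tau> = (\<Sum>C\<in>?P. bd n (\<lambda>\<sigma>. a C * restr C Z \<sigma>) \<tau>)"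
      by (rule bd_sum)
    also have "\<dots> = (\<Sum>C\<in>?P. a C * bd n (restr C Z) \<tau>)"
      by (simp add: bd_mult)
    finally show ?thesis using B(3) by simp
  qed
  then have "is_cycle n d Y" using Ychain by (auto simp: is_cycle_def)
  then obtain \<alpha> where \<alpha>: "Y = (\<lambda>\<sigma>. \<alpha> * Z \<sigma>)" using sc Ysupp by (auto simp: simple_cycle_def)
  have eq: "a C = \<alpha>" if C: "C \<in> ?P" for C
  proof -
    obtain \<sigma> where \<sigma>: "\<sigma> \<in> C" using quot_facts(2)[OF EV C] by auto
    have \<sigma>V: "\<sigma> \<in> V" using quot_facts(1)[OF EV C] \<sigma> by auto
    then have Bz: "B \<sigma> = 0" "Z \<sigma> \<noteq> 0" using BD by (auto simp: V_def supp_def)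
    have "(\<Sum>C'\<in>?P. a C' * restr C' Z \<sigma>) = (\<Sum>C'\<in>?P. if C' = C then a C * Z \<sigma> else 0)"
    proof (rule sum.cong[OF refl])
      fix C' assume C': "C' \<in> ?P"
      show "a C' * restr C' Z \<sigma> = (if C' = C then a C * Z \<sigma> else 0)"
      proof (cases "C' = C")
        case True
        then show ?thesis using \<sigma> by (simp add: restr_def)
      next
        case False
        then have "\<sigma> \<notin> C'" using quot_disj[OF symE C' C _ \<sigma>] by blast
        then show ?thesis using False by (simp add: restr_def)
      qed
    qed
    also have "\<dots> = a C * Z \<sigma>" using finP C by simp
    finally have "Y \<sigma> = a C * Z \<sigma>" using Bz by (simp add: Y_def)
    then have "a C * Z \<sigma> = \<alpha> * Z \<sigma>" using \<alpha> by metis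
    then show ?thesis using Bz(2) by simp
  qed
  show ?thesis using eq[OF C0(1)] C0(2) eq by simp
qed


lemma bd_zero: "bd n (\<lambda>_. 0 :: 'a::comm_ring_1) = (\<lambda>_. 0)"
  by (simp add: bd_def fun_eq_iff)

lemma chains_span:
  assumes "is_chain n k c"
  shows "c \<in> module.span (cscale :: 'a::field \<Rightarrow> _) ((\<lambda>\<sigma>. (\<lambda>\<tau>. if \<tau> = \<sigma> then 1 else 0)) ` {\<sigma>. simplex n k \<sigma>})"
proof -
  interpret VS: vector_space "cscale :: 'a \<Rightarrow> (nat set \<Rightarrow> 'a) \<Rightarrow> _" by (rule vector_space_cscale)
  let ?S = "{\<sigma>. simplex n k \<sigma>}"
  let ?e = "\<lambda>\<sigma>. (\<lambda>\<tau>. if \<tau> = \<sigma> then (1::'a) else 0)"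
  have "c = (\<Sum>\<sigma>\<in>?S. cscale (c \<sigma>) (?e \<sigma>))"
  proof
    fix \<tau>
    have "(\<Sum>\<sigma>\<in>?S. cscale (c \<sigma>) (?e \<sigma>)) \<tau> = (\<Sum>\<sigma>\<in>?S. if \<tau> = \<sigma> then c \<sigma> else 0)"
      by (simp add: sum_apply_fun cscale_def if_distrib cong: if_cong)
    also have "\<dots> = (if \<tau> \<in> ?S then c \<tau> else 0)"
      using finite_simplices[of n k] by (simp add: sum.delta)
    also have "\<dots> = c \<tau>" using assms by (auto simp: is_chain_def supp_def)
    finally show "c \<tau> = (\<Sum>\<sigma>\<in>?S. cscale (c \<sigma>) (?e \<sigma>)) \<tau>" by simp
  qed
  also have "\<dots> \<in> VS.span (?e ` ?S)"
    by (intro VS.span_sum VS.span_scale VS.span_base) auto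
  finally show ?thesis .
qed

theorem corollary5p2:
  fixes Z :: "nat set \<Rightarrow> 'a::field" and n d :: nat and D :: "nat set set"
  assumes "d \<ge> 1"
    and "simple_cycle n d Z"
    and "D \<subseteq> supp Z"
  shows "num_components d (supp Z - D) \<le> 1 + betti TYPE('a) n (d - 1) (cplx D)"
proof -
  interpret VS: vector_space "cscale :: 'a \<Rightarrow> (nat set \<Rightarrow> 'a) \<Rightarrow> _" by (rule vector_space_cscale)
  note d = assms(1) and sc = assms(2) and DZ = assms(3)
  have cyc: "is_cycle n d Z" using sc by (simp add: simple_cycle_def)
  define P where "P = (supp Z - D) // {(\<sigma>, \<tau>). \<sigma> \<in> supp Z - D \<and> \<tau> \<in> supp Z - D \<and> facet_adj d \<sigma> \<tau>}\<^sup>*"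
  define g where "g = (\<lambda>C. bd n (restr C Z))"
  define Cyc where "Cyc = (cycles_on n (d - 1) (cplx D) :: (nat set \<Rightarrow> 'a) set)"
  define Bd where "Bd = (boundaries_on n (d - 1) (cplx D) :: (nat set \<Rightarrow> 'a) set)"
  define W where "W = (\<lambda>\<sigma>. (\<lambda>\<tau>. if \<tau> = \<sigma> then (1::'a) else 0)) ` {\<sigma>. simplex n (d - 1) \<sigma>}"
  have finW: "finite W" unfolding W_def using finite_simplices by blast
  have key': "\<forall>C\<in>P. a C = 0" if "C0 \<in> P" "a C0 = 0" "(\<lambda>\<tau>. \<Sum>C\<in>P. a C * g C \<tau>) \<in> Bd" for a C0
    using key[OF sc DZ d, of C0 a] that unfolding P_def g_def Bd_def by blast
  have finV: "finite (supp Z - D)" using chain_supp_finite cyc is_cycle_def by blast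
  have PV: "C \<subseteq> supp Z - D" if "C \<in> P" for C
    using that unfolding P_def by (rule quot_facts(1)[rotated]) auto
  have finP: "finite P"
    by (rule finite_subset[of _ "Pow (supp Z - D)"]) (use PV finV in auto)
  have gCyc: "g C \<in> Cyc" if "C \<in> P" for C
  proof -
    have ch: "is_chain n d (restr C Z)" using restr_chain cyc is_cycle_def by blast
    show ?thesis unfolding Cyc_def cycles_on_def is_cycle_def g_def
      using bd_chain[OF ch d] bd_bd bd_supp_cplx[OF cyc d, of C D] that unfolding P_def by auto
  qed
  have BdCyc: "Bd \<subseteq> Cyc"
  proof
    fix x assume "x \<in> Bd"
    then obtain B where B: "x = bd n B" "is_chain n (d - 1 + 1) B" "supp B \<subseteq> cplx D"
      unfolding Bd_def boundaries_on_def by auto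
    have Bc: "is_chain n d B" using B(2) d by simp
    have "supp (bd n B) \<subseteq> cplx D"
    proof
      fix \<tau> assume "\<tau> \<in> supp (bd n B)"
      then obtain v where "B (insert v \<tau>) \<noteq> 0"
        unfolding bd_def supp_def by (auto elim!: sum_nonzeroE)
      then have "insert v \<tau> \<in> cplx D" using B(3) by (auto simp: supp_def)
      then show "\<tau> \<in> cplx D" by (auto simp: cplx_def)
    qed
    then show "x \<in> Cyc" unfolding Cyc_def cycles_on_def is_cycle_def
      using bd_chain[OF Bc d] bd_bd B(1) by auto
  qed
  have CycW: "Cyc \<subseteq> VS.span W"
    unfolding Cyc_def cycles_on_def is_cycle_def W_def using chains_span by blast
  have subBd: "VS.subspace Bd"
    unfolding VS.subspace_def
  proof (intro conjI ballI allI)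
    show "0 \<in> Bd" unfolding Bd_def boundaries_on_def
      by (rule CollectI, rule exI[of _ "\<lambda>_. 0"]) (auto simp: bd_zero is_chain_def supp_def zero_fun_def)
  next
    fix x y assume "x \<in> Bd" "y \<in> Bd"
    then obtain B1 B2 where B: "x = bd n B1" "is_chain n (d - 1 + 1) B1" "supp B1 \<subseteq> cplx D"
      "y = bd n B2" "is_chain n (d - 1 + 1) B2" "supp B2 \<subseteq> cplx D"
      unfolding Bd_def boundaries_on_def by auto
    have "x + y = bd n (\<lambda>\<sigma>. B1 \<sigma> + B2 \<sigma>)" using B by (simp add: fun_eq_iff bd_add)
    moreover have "is_chain n (d - 1 + 1) (\<lambda>\<sigma>. B1 \<sigma> + B2 \<sigma>)" "supp (\<lambda>\<sigma>. B1 \<sigma> + B2 \<sigma>) \<subseteq> cplx D"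
      using B unfolding is_chain_def supp_def subset_eq by (metis (mono_tags, lifting) add.left_neutral mem_Collect_eq)+
    ultimately show "x + y \<in> Bd" unfolding Bd_def boundaries_on_def by blast
  next
    fix c x assume "x \<in> Bd"
    then obtain B1 where B: "x = bd n B1" "is_chain n (d - 1 + 1) B1" "supp B1 \<subseteq> cplx D"
      unfolding Bd_def boundaries_on_def by auto
    have "cscale c x = bd n (\<lambda>\<sigma>. c * B1 \<sigma>)" using B by (simp add: fun_eq_iff bd_mult cscale_def)
    moreover have "is_chain n (d - 1 + 1) (\<lambda>\<sigma>. c * B1 \<sigma>)" "supp (\<lambda>\<sigma>. c * B1 \<sigma>) \<subseteq> cplx D"
      using B by (auto simp: is_chain_def supp_def subset_eq)
    ultimately show "cscale c x \<in> Bd" unfolding Bd_def boundaries_on_def by blast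
  qed
  obtain b where b: "b \<subseteq> Bd" "VS.independent b" "Bd \<subseteq> VS.span b" "card b = VS.dim Bd"
    using VS.basis_exists by blast
  have finb: "finite b" using VS.independent_span_bound[OF finW b(2)] b(1) BdCyc CycW by blast
  obtain A where A: "A \<subseteq> Cyc" "VS.independent A" "Cyc \<subseteq> VS.span A" "card A = VS.dim Cyc"
    using VS.basis_exists by blast
  have finA: "finite A" using VS.independent_span_bound[OF finW A(2)] A(1) CycW by blast
  have lin: "(\<Sum>C\<in>P. cscale (a C) (g C)) = (\<lambda>\<tau>. \<Sum>C\<in>P. a C * g C \<tau>)" for a
    by (simp add: fun_eq_iff sum_apply_fun cscale_def)
  have nc: "num_components d (supp Z - D) = card P" unfolding num_components_def P_def by simp
  show ?thesis
  proof (cases "P = {}")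
    case True
    then show ?thesis using nc by simp
  next
    case False
    then obtain C0 where C0: "C0 \<in> P" by blast
    let ?S = "g ` (P - {C0})"
    have Bd0: "0 \<in> Bd" using subBd VS.subspace_0 by blast
    have inj: "inj_on g (P - {C0})"
    proof (rule inj_onI)
      fix C1 C2 assume C: "C1 \<in> P - {C0}" "C2 \<in> P - {C0}" "g C1 = g C2"
      show "C1 = C2"
      proof (rule ccontr)
        assume ne: "C1 \<noteq> C2"
        define a where "a = (\<lambda>C. if C = C1 then (1::'a) else if C = C2 then -1 else 0)"
        have "(\<lambda>\<tau>. \<Sum>C\<in>P. a C * g C \<tau>) = (\<lambda>\<tau>. g C1 \<tau> - g C2 \<tau>)"
        proof
          fix \<tau>
          have "(\<Sum>C\<in>P. a C * g C \<tau>) = (\<Sum>C\<in>P. (if C = C1 then g C1 \<tau> else 0) + (if C = C2 then - g C2 \<tau> else 0))"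
            by (rule sum.cong) (auto simp: a_def ne)
          also have "\<dots> = g C1 \<tau> - g C2 \<tau>" using finP C by (simp add: sum.distrib)
          finally show "(\<Sum>C\<in>P. a C * g C \<tau>) = g C1 \<tau> - g C2 \<tau>" .
        qed
        also have "\<dots> = 0" using C(3) by (simp add: zero_fun_def)
        finally have inB: "(\<lambda>\<tau>. \<Sum>C\<in>P. a C * g C \<tau>) \<in> Bd" using Bd0 by simp
        have "a C0 = 0" using C by (auto simp: a_def)
        then have "\<forall>C\<in>P. a C = 0" using key'[of C0 a] C0 inB by blast
        then have "a C1 = 0" using C by blast
        then show False by (simp add: a_def)
      qed
    qed
    have disj: "b \<inter> ?S = {}"
    proof (rule ccontr)
      assume "b \<inter> ?S \<noteq> {}"
      then obtain C1 where C1: "C1 \<in> P - {C0}" "g C1 \<in> Bd" using b(1) by blast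
      define a where "a = (\<lambda>C. if C = C1 then (1::'a) else 0)"
      have "(\<lambda>\<tau>. \<Sum>C\<in>P. a C * g C \<tau>) = g C1"
      proof
        fix \<tau>
        have "(\<Sum>C\<in>P. a C * g C \<tau>) = (\<Sum>C\<in>P. if C = C1 then g C1 \<tau> else 0)"
          by (rule sum.cong) (auto simp: a_def)
        then show "(\<Sum>C\<in>P. a C * g C \<tau>) = g C1 \<tau>" using finP C1 by simp
      qed
      then have inB: "(\<lambda>\<tau>. \<Sum>C\<in>P. a C * g C \<tau>) \<in> Bd" using C1 by simp
      have "a C0 = 0" using C1 by (auto simp: a_def)
      then have "\<forall>C\<in>P. a C = 0" using key'[of C0 a] C0 inB by blast
      then have "a C1 = 0" using C1 by blast
      then show False by (simp add: a_def)
    qed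
    have indep: "VS.independent (b \<union> ?S)"
    proof
      assume "VS.dependent (b \<union> ?S)"
      then obtain T u v0 where T: "finite T" "T \<subseteq> b \<union> ?S" "(\<Sum>v\<in>T. cscale (u v) v) = 0"
        and v0: "v0 \<in> T" "u v0 \<noteq> 0"
        unfolding VS.dependent_explicit by blast
      define T1 where "T1 = T \<inter> b"
      define T2 where "T2 = T - b"
      define Q where "Q = {C \<in> P - {C0}. g C \<in> T2}"
      have T2Q: "T2 = g ` Q" using T(2) unfolding T2_def Q_def by blast
      have injQ: "inj_on g Q" using inj by (rule inj_on_subset) (auto simp: Q_def)
      define a where "a = (\<lambda>C. if C \<in> Q then u (g C) else 0)"
      have QP: "Q \<subseteq> P" by (auto simp: Q_def)
      have s2: "(\<Sum>v\<in>T2. cscale (u v) v) = (\<Sum>C\<in>P. cscale (a C) (g C))"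
      proof -
        have "(\<Sum>v\<in>T2. cscale (u v) v) = (\<Sum>C\<in>Q. cscale (u (g C)) (g C))"
          unfolding T2Q by (rule sum.reindex[OF injQ, unfolded comp_def])
        also have "\<dots> = (\<Sum>C\<in>P. cscale (a C) (g C))"
          by (rule sum.mono_neutral_cong_left[OF finP QP]) (auto simp: a_def cscale_def zero_fun_def)
        finally show ?thesis .
      qed
      have s1: "(\<Sum>v\<in>T1. cscale (u v) v) \<in> Bd"
      proof -
        have "(\<Sum>v\<in>T1. cscale (u v) v) \<in> VS.span b"
          by (intro VS.span_sum VS.span_scale VS.span_base) (auto simp: T1_def)
        then show ?thesis using VS.span_minimal[OF b(1) subBd] by blast
      qed
      have finT: "finite T1" "finite T2" using T(1) by (auto simp: T1_def T2_def)
      have "(\<Sum>v\<in>T. cscale (u v) v) = (\<Sum>v\<in>T1. cscale (u v) v) + (\<Sum>v\<in>T2. cscale (u v) v)"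
      proof -
        have "T = T1 \<union> T2" "T1 \<inter> T2 = {}" by (auto simp: T1_def T2_def)
        then show ?thesis using sum.union_disjoint[OF finT] by simp
      qed
      then have "(\<Sum>C\<in>P. cscale (a C) (g C)) = - (\<Sum>v\<in>T1. cscale (u v) v)"
        using T(3) s2 by (simp add: add_eq_0_iff)
      then have "(\<Sum>C\<in>P. cscale (a C) (g C)) \<in> Bd" using VS.subspace_neg[OF subBd s1] by simp
      then have inB: "(\<lambda>\<tau>. \<Sum>C\<in>P. a C * g C \<tau>) \<in> Bd" using lin by simp
      have "a C0 = 0" by (simp add: a_def Q_def)
      then have a0: "\<forall>C\<in>P. a C = 0" using key'[of C0 a] C0 inB by blast
      have u2: "u v = 0" if vT2: "v \<in> T2" for v
      proof -
        obtain C where "C \<in> Q" "v = g C" using vT2 T2Q by blast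
        moreover from this(1) have "a C = 0" using a0 QP by blast
        ultimately show ?thesis by (simp add: a_def)
      qed
      then have "(\<Sum>v\<in>T2. cscale (u v) v) = 0" by (intro sum.neutral) (simp add: cscale_def zero_fun_def)
      then have "(\<Sum>v\<in>T1. cscale (u v) v) = 0" using T(3) \<open>(\<Sum>v\<in>T. cscale (u v) v) = _ + _\<close> by simp
      then have u1: "\<forall>v\<in>T1. u v = 0" using b(2) finT(1) unfolding VS.dependent_explicit T1_def by blast
      have "v0 \<in> T1 \<or> v0 \<in> T2" using v0 by (auto simp: T1_def T2_def)
      then show False using u1 u2 v0 by blast
    qed
    have "card (b \<union> ?S) = card b + card (P - {C0})"
      using card_Un_disjoint[OF finb _ disj] finP card_image[OF inj] by simp
    also have "card (P - {C0}) = card P - 1" using C0 finP by simp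
    finally have c1: "card (b \<union> ?S) = VS.dim Bd + (card P - 1)" using b(4) by simp
    have "b \<union> ?S \<subseteq> VS.span A" using b(1) BdCyc gCyc A(3) by blast
    then have "card (b \<union> ?S) \<le> card A" using VS.independent_span_bound[OF finA indep] by blast
    then have "VS.dim Bd + (card P - 1) \<le> VS.dim Cyc" using c1 A(4) by simp
    moreover have "card P \<ge> 1" using C0 finP by (simp add: Suc_le_eq card_gt_0_iff) blast
    ultimately show ?thesis unfolding nc betti_def Cyc_def[symmetric] Bd_def[symmetric] by linarith
  qed
qed

end
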